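(* Let $m$ be a positive integer and, for complex $\alpha$, let \[ I(\alpha,m) = m \int_{0}^{\infty} y^{\alpha} e^{-y} (1-e^{-y})^{m-1} \, dy, \qquad y^{\alpha}=e^{\alpha\log y}. \] (i) If $\alpha\in\mathbb{C}$ is not a nonpositive integer and $\operatorname{Re}(m+\alpha)>0$, then the integral $I(\alpha,m)$ converges and \[ I(\alpha,m) = \Gamma(\alpha+1) \sum_{k = 1}^{m} (-1)^{k-1} \binom{m}{k} \frac{1}{k^{\alpha}}. \] (ii) If $n\in\{1,2,\dots,m-1\}$, then \[ I(-n,m) = \frac{(-1)^{n-1}}{(n-1)!} \sum_{k = 1}^{m} (-1)^{k} \binom{m}{k} k^{n} \log{k}. \] (iii) Moreover, \[ \frac{\partial I}{\partial\alpha}(0,m) = m\int_{0}^{\infty} e^{-y}(1-e^{-y})^{m-1}\log{y} \, dy = -\gamma - \sum_{k = 1}^{m} (-1)^{k-1} \binom{m}{k} \log{k}, \] where $\gamma=-\Gamma'(1)$ is the Euler--Mascheroni constant.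
   Context: $\Gamma$ denotes the Gamma function. *)

theory Defs
  imports "HOL-Analysis.Analysis"
begin

definition I_integrand :: "complex \<Rightarrow> nat \<Rightarrow> real \<Rightarrow> complex" where
  "I_integrand \<alpha> m y =
     (complex_of_real y) powr \<alpha> * complex_of_real (exp (- y)) * complex_of_real ((1 - exp (- y)) ^ (m - 1))"

definition I_fun :: "complex \<Rightarrow> nat \<Rightarrow> complex" where
  "I_fun \<alpha> m = of_nat m * (LINT y:{0<..}|lborel. I_integrand \<alpha> m y)"

end

theory Submission
  imports Defs "HOL-Complex_Analysis.Complex_Analysis"
begin

definition gm :: "nat \<Rightarrow> real \<Rightarrow> real" where
  "gm m y = exp (- y) * (1 - exp (- y)) ^ (m - 1)"

definition Fi :: "nat \<Rightarrow> complex \<Rightarrow> real \<Rightarrow> complex" where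
  "Fi m a y = exp (a * complex_of_real (ln y)) * complex_of_real (gm m y)"

definition Pm :: "nat \<Rightarrow> real \<Rightarrow> real \<Rightarrow> real" where
  "Pm m c y = exp (c * ln y) * gm m y"

lemma gm_measurable [measurable]: "gm m \<in> borel_measurable borel"
  unfolding gm_def by measurable

lemma gm_nonneg: "y \<ge> 0 \<Longrightarrow> gm m y \<ge> 0"
  unfolding gm_def by auto

lemma gm_le: assumes "y > 0" "m > 0" shows "gm m y \<le> exp ((real m - 1) * ln y) * exp (- y)"
proof -
  have a: "0 \<le> 1 - exp (- y)" using assms by auto
  have b: "1 - exp (- y) \<le> y" using exp_ge_add_one_self[of "-y"] by linarith
  have "(1 - exp (- y)) ^ (m - 1) \<le> y ^ (m - 1)" using a b by (intro power_mono)
  also have "y ^ (m - 1) \<le> exp ((real m - 1) * ln y)"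
  proof (cases "m = 0")
    case True
    then show ?thesis using assms by simp
  next
    case False
    then have "real (m - 1) = real m - 1" by simp
    then show ?thesis using assms by (metis exp_ln_iff order_refl exp_of_nat_mult ln_realpow mult.commute)
  qed
  finally show ?thesis unfolding gm_def by (simp add: mult.commute mult_left_mono)
qed

lemma base_int:
  fixes b :: real
  assumes "b > -1"
  shows "set_integrable lborel {0<..} (\<lambda>y. exp (b * ln y) * exp (- y))"
proof -
  have "((\<lambda>t::real. t powr (b + 1 - 1) / exp t) has_integral Gamma (b + 1)) {0..}"
    using assms by (intro Gamma_integral_real) simp
  then have "(\<lambda>t::real. t powr (b + 1 - 1) / exp t) absolutely_integrable_on {0..}"
    by (intro nonnegative_absolutely_integrable_1) (auto simp: integrable_on_def)
  then have "set_integrable lborel {0..} (\<lambda>t::real. t powr (b + 1 - 1) / exp t)"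
    unfolding set_integrable_def by (subst (asm) integrable_completion) auto
  then have "set_integrable lborel {0<..} (\<lambda>t::real. t powr (b + 1 - 1) / exp t)"
    by (rule set_integrable_subset) auto
  then show ?thesis
    by (rule set_integrable_cong[THEN iffD1, rotated -1]) (auto simp: powr_def exp_minus field_simps)
qed


lemma Pm_measurable [measurable]: "Pm m c \<in> borel_measurable borel"
  unfolding Pm_def by measurable

lemma Pm_nonneg: "y \<ge> 0 \<Longrightarrow> Pm m c y \<ge> 0"
  unfolding Pm_def using gm_nonneg by auto

lemma Pm_int:
  assumes "c > - real m" "m > 0"
  shows "set_integrable lborel {0<..} (Pm m c)"
proof (rule set_integrable_bound[OF base_int[where b="c + real m - 1"]])
  show "- 1 < c + real m - 1" using assms by simp
  show "set_borel_measurable lborel {0<..} (Pm m c)"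
    unfolding set_borel_measurable_def by measurable
  show "AE x in lborel. x \<in> {0<..} \<longrightarrow> norm (Pm m c x) \<le> norm (exp ((c + real m - 1) * ln x) * exp (- x))"
  proof (intro AE_I2 impI)
    fix x :: real assume x: "x \<in> {0<..}"
    have "Pm m c x = exp (c * ln x) * gm m x" by (simp add: Pm_def)
    also have "\<dots> \<le> exp (c * ln x) * (exp ((real m - 1) * ln x) * exp (- x))"
      using gm_le[of x m] x assms by (intro mult_left_mono) auto
    also have "\<dots> = exp ((c + real m - 1) * ln x) * exp (- x)"
      by (simp add: algebra_simps flip: exp_add)
    finally show "norm (Pm m c x) \<le> norm (exp ((c + real m - 1) * ln x) * exp (- x))"
      using x gm_nonneg[of x m] by (simp add: Pm_def)
  qed
qed

lemma Fi_measurable [measurable]: "Fi m a \<in> borel_measurable borel"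
  unfolding Fi_def by measurable

lemma norm_Fi: "y > 0 \<Longrightarrow> norm (Fi m a y) = Pm m (Re a) y"
  unfolding Fi_def Pm_def using gm_nonneg[of y m] by (simp add: norm_mult)

lemma Fi_int:
  assumes "Re a > - real m" "m > 0"
  shows "set_integrable lborel {0<..} (Fi m a)"
proof (rule set_integrable_bound[OF Pm_int[where c="Re a" and m=m]])
  show "set_borel_measurable lborel {0<..} (Fi m a)"
    unfolding set_borel_measurable_def by measurable
  show "AE x in lborel. x \<in> {0<..} \<longrightarrow> norm (Fi m a x) \<le> norm (Pm m (Re a) x)"
    by (intro AE_I2 impI) (simp add: norm_Fi)
qed (use assms in auto)

lemma ln_bound:
  fixes y d :: real
  assumes "y > 0" "d > 0"
  shows "\<bar>ln y\<bar> \<le> (exp (d * ln y) + exp (- d * ln y)) / d"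
proof -
  have "d * \<bar>ln y\<bar> \<le> exp (d * \<bar>ln y\<bar>)" using exp_ge_add_one_self[of "d * \<bar>ln y\<bar>"] by linarith
  also have "\<dots> \<le> exp (d * ln y) + exp (- d * ln y)"
    by (cases "ln y \<ge> 0") (auto simp: add_increasing add_increasing2)
  finally show ?thesis using assms by (simp add: field_simps)
qed

lemma lnFi_int:
  assumes "Re a > - real m" "m > 0"
  shows "set_integrable lborel {0<..} (\<lambda>y. complex_of_real (ln y) * Fi m a y)"
proof -
  define d where "d = (Re a + real m) / 2"
  have d: "d > 0" using assms by (simp add: d_def)
  have i: "set_integrable lborel {0<..} (\<lambda>y. (Pm m (Re a + d) y + Pm m (Re a - d) y) / d)"
  proof -
    have "Re a + d > - real m" using assms unfolding d_def by (simp add: field_simps)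
    moreover have "Re a - d > - real m" using assms unfolding d_def by (simp add: field_simps)
    ultimately
    show ?thesis using Pm_int[where c="Re a + d" and m=m] Pm_int[where c="Re a - d" and m=m] assms
      by (intro set_integrable_divide set_integral_add(1)) auto
  qed
  show ?thesis
  proof (rule set_integrable_bound[OF i])
    show "set_borel_measurable lborel {0<..} (\<lambda>y. complex_of_real (ln y) * Fi m a y)"
      unfolding set_borel_measurable_def by measurable
    show "AE x in lborel. x \<in> {0<..} \<longrightarrow> norm (complex_of_real (ln x) * Fi m a x) \<le>
            norm ((Pm m (Re a + d) x + Pm m (Re a - d) x) / d)"
    proof (intro AE_I2 impI)
      fix x :: real assume x: "x \<in> {0<..}"
      have "norm (complex_of_real (ln x) * Fi m a x) = \<bar>ln x\<bar> * Pm m (Re a) x"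
        using x by (simp add: norm_mult norm_Fi)
      also have "\<dots> \<le> (exp (d * ln x) + exp (- d * ln x)) / d * Pm m (Re a) x"
        using ln_bound[of x d] x d gm_nonneg[of x m]
        by (intro mult_right_mono) (auto simp: Pm_def)
      also have "\<dots> = (Pm m (Re a + d) x + Pm m (Re a - d) x) / d"
        by (simp add: Pm_def field_simps flip: exp_add)
      finally show "norm (complex_of_real (ln x) * Fi m a x) \<le> norm ((Pm m (Re a + d) x + Pm m (Re a - d) x) / d)"
        using d x Pm_nonneg[of x m "Re a + d"] Pm_nonneg[of x m "Re a - d"] by simp
    qed
  qed
qed


lemma exp_lin_bound:
  fixes L c d t :: real
  assumes "\<bar>t - c\<bar> \<le> d"
  shows "exp (t * L) \<le> exp ((c - d) * L) + exp ((c + d) * L)"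
proof (cases "L \<ge> 0")
  case True
  then have "t * L \<le> (c + d) * L" using assms by (intro mult_right_mono) auto
  then show ?thesis by (meson add_increasing exp_gt_zero exp_le_cancel_iff less_eq_real_def)
next
  case False
  then have "t * L \<le> (c - d) * L" using assms by (intro mult_right_mono_neg) auto
  then show ?thesis by (meson add_increasing2 exp_gt_zero exp_le_cancel_iff less_eq_real_def)
qed

lemma Fi_diff_bound:
  assumes y: "y > 0" and d: "d > 0" and z: "z \<in> cball a0 d"
  shows "norm (Fi m z y - Fi m a0 y) \<le>
     (2 * Pm m (Re a0) y + Pm m (Re a0 - 2 * d) y + Pm m (Re a0 + 2 * d) y) / d * norm (z - a0)"
proof -
  define L where "L = ln y"
  define B where "B = \<bar>L\<bar> * (exp ((Re a0 - d) * L) + exp ((Re a0 + d) * L))"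
  have der: "((\<lambda>w. exp (w * complex_of_real L)) has_field_derivative exp (w * complex_of_real L) * complex_of_real L)
              (at w within cball a0 d)" for w
    by (auto intro!: derivative_eq_intros)
  have bnd: "norm (exp (w * complex_of_real L) * complex_of_real L) \<le> B" if "w \<in> cball a0 d" for w
  proof -
    have "\<bar>Re w - Re a0\<bar> \<le> d"
      using that abs_Re_le_cmod[of "w - a0"] by (auto simp: dist_norm norm_minus_commute)
    then have "exp (Re w * L) \<le> exp ((Re a0 - d) * L) + exp ((Re a0 + d) * L)"
      by (intro exp_lin_bound)
    then show ?thesis unfolding B_def by (simp add: norm_mult mult.commute mult_left_mono)
  qed
  have "norm (exp (z * complex_of_real L) - exp (a0 * complex_of_real L)) \<le> B * norm (z - a0)"
    by (rule field_differentiable_bound[OF convex_cball der bnd z]) (use d in auto)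
  moreover have "B \<le> (2 * exp (Re a0 * L) + exp ((Re a0 - 2 * d) * L) + exp ((Re a0 + 2 * d) * L)) / d"
  proof -
    have "B \<le> (exp (d * L) + exp (- d * L)) / d * (exp ((Re a0 - d) * L) + exp ((Re a0 + d) * L))"
      unfolding B_def L_def using ln_bound[OF y d] by (intro mult_right_mono) auto
    also have "\<dots> = (2 * exp (Re a0 * L) + exp ((Re a0 - 2 * d) * L) + exp ((Re a0 + 2 * d) * L)) / d"
      by (simp add: field_simps flip: exp_add)
    finally show ?thesis .
  qed
  ultimately have n1: "norm (exp (z * complex_of_real L) - exp (a0 * complex_of_real L)) \<le>
     (2 * exp (Re a0 * L) + exp ((Re a0 - 2 * d) * L) + exp ((Re a0 + 2 * d) * L)) / d * norm (z - a0)"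
    by (meson mult_right_mono norm_ge_zero order_trans)
  have n2: "norm (Fi m z y - Fi m a0 y) = norm (exp (z * complex_of_real L) - exp (a0 * complex_of_real L)) * gm m y"
    unfolding Fi_def L_def using gm_nonneg[of y m] y by (simp add: norm_mult flip: left_diff_distrib)
  have gnn: "0 \<le> gm m y" using gm_nonneg[of y m] y by simp
  have "norm (Fi m z y - Fi m a0 y) \<le> ((2 * exp (Re a0 * L) + exp ((Re a0 - 2 * d) * L) + exp ((Re a0 + 2 * d) * L)) / d * norm (z - a0)) * gm m y"
    unfolding n2 by (rule mult_right_mono[OF n1 gnn])
  also have "\<dots> = (2 * Pm m (Re a0) y + Pm m (Re a0 - 2 * d) y + Pm m (Re a0 + 2 * d) y) / d * norm (z - a0)"
    unfolding Pm_def L_def by (simp add: algebra_simps add_divide_distrib)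
  finally show ?thesis .
qed


lemma Fi_has_deriv:
  "((\<lambda>z. Fi m z y) has_field_derivative complex_of_real (ln y) * Fi m a y) (at a)"
  unfolding Fi_def by (auto intro!: derivative_eq_intros)

lemma Phi_deriv:
  assumes a0: "Re a0 > - real m" and m: "m > 0"
  shows "((\<lambda>a. LINT y:{0<..}|lborel. Fi m a y) has_field_derivative
           (LINT y:{0<..}|lborel. complex_of_real (ln y) * Fi m a0 y)) (at a0)"
proof -
  define d where "d = (Re a0 + real m) / 3"
  have d: "d > 0" using a0 by (simp add: d_def)
  define W where "W y = (2 * Pm m (Re a0) y + Pm m (Re a0 - 2*d) y + Pm m (Re a0 + 2*d) y) / d" for y
  have Wint: "set_integrable lborel {0<..} W"
  proof -
    have "Re a0 - 2*d > - real m" using a0 unfolding d_def by (simp add: field_simps)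
    moreover have "Re a0 + 2*d > - real m" using a0 d by simp
    ultimately show ?thesis unfolding W_def using a0 m
      Pm_int[where c="Re a0" and m=m] Pm_int[where c="Re a0 - 2*d" and m=m] Pm_int[where c="Re a0 + 2*d" and m=m]
      by (intro set_integrable_divide set_integral_add(1) set_integrable_mult_right) auto
  qed
  have Fint: "set_integrable lborel {0<..} (Fi m z)" if "z \<in> ball a0 d" for z
  proof -
    have "\<bar>Re z - Re a0\<bar> < d"
      using that abs_Re_le_cmod[of "z - a0"] by (auto simp: dist_norm norm_minus_commute)
    then have "Re z > Re a0 - d" by linarith
    moreover have "Re a0 - d > - real m" using a0 unfolding d_def by (simp add: field_simps)
    ultimately have "Re z > - real m" by linarith
    then show ?thesis using Fi_int m by blast
  qed
  define D where "D = (LINT y:{0<..}|lborel. complex_of_real (ln y) * Fi m a0 y)"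
  define Phi where "Phi a = (LINT y:{0<..}|lborel. Fi m a y)" for a
  have "((\<lambda>z. (Phi z - Phi a0) / (z - a0)) \<longlongrightarrow> D) (at a0 within ball a0 d)"
    unfolding tendsto_at_iff_sequentially
  proof (intro allI impI)
    fix X :: "nat \<Rightarrow> complex"
    assume X: "\<forall>i. X i \<in> ball a0 d - {a0}" and Xlim: "X \<longlonglongrightarrow> a0"
    have Xat: "filterlim X (at a0) sequentially"
      using X Xlim by (intro filterlim_atI) auto
    have eq: "(Phi (X i) - Phi a0) / (X i - a0) =
       integral\<^sup>L lborel (\<lambda>y. indicator {0<..} y *\<^sub>R ((Fi m (X i) y - Fi m a0 y) / (X i - a0)))" for i
    proof -
      have "(Phi (X i) - Phi a0) / (X i - a0) = (LINT y:{0<..}|lborel. (Fi m (X i) y - Fi m a0 y) / (X i - a0))"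
        unfolding Phi_def using Fint[of "X i"] Fint[of a0] X d by (simp add: set_integral_diff(2))
      then show ?thesis unfolding set_lebesgue_integral_def .
    qed
    have "(\<lambda>i. integral\<^sup>L lborel (\<lambda>y. indicator {0<..} y *\<^sub>R ((Fi m (X i) y - Fi m a0 y) / (X i - a0))))
            \<longlonglongrightarrow> integral\<^sup>L lborel (\<lambda>y. indicator {0<..} y *\<^sub>R (complex_of_real (ln y) * Fi m a0 y))"
    proof (rule integral_dominated_convergence[where w = "\<lambda>y. indicator {0<..} y *\<^sub>R W y"])
      show "(\<lambda>y. indicator {0<..} y *\<^sub>R (complex_of_real (ln y) * Fi m a0 y)) \<in> borel_measurable lborel"
        by measurable
      show "(\<lambda>y. indicator {0<..} y *\<^sub>R ((Fi m (X i) y - Fi m a0 y) / (X i - a0))) \<in> borel_measurable lborel" for i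
        by measurable
      show "integrable lborel (\<lambda>y. indicator {0<..} y *\<^sub>R W y)"
        using Wint by (simp add: set_integrable_def)
      show "AE y in lborel. (\<lambda>i. indicator {0<..} y *\<^sub>R ((Fi m (X i) y - Fi m a0 y) / (X i - a0)))
              \<longlonglongrightarrow> indicator {0<..} y *\<^sub>R (complex_of_real (ln y) * Fi m a0 y)"
      proof (intro AE_I2 tendsto_scaleR tendsto_const)
        fix y :: real
        have "((\<lambda>z. (Fi m z y - Fi m a0 y) / (z - a0)) \<longlongrightarrow> complex_of_real (ln y) * Fi m a0 y) (at a0)"
          using Fi_has_deriv[of m y a0] unfolding has_field_derivative_iff .
        from filterlim_compose[OF this Xat]
        show "(\<lambda>i. (Fi m (X i) y - Fi m a0 y) / (X i - a0)) \<longlonglongrightarrow> complex_of_real (ln y) * Fi m a0 y"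
          by (simp add: o_def)
      qed
      show "AE y in lborel. norm (indicator {0<..} y *\<^sub>R ((Fi m (X i) y - Fi m a0 y) / (X i - a0)))
              \<le> indicator {0<..} y *\<^sub>R W y" for i
      proof (intro AE_I2)
        fix y :: real
        show "norm (indicator {0<..} y *\<^sub>R ((Fi m (X i) y - Fi m a0 y) / (X i - a0)))
              \<le> indicator {0<..} y *\<^sub>R W y"
        proof (cases "y > 0")
          case True
          have Xi: "X i \<in> cball a0 d" "X i \<noteq> a0" using X[rule_format, of i] by auto
          have "norm (Fi m (X i) y - Fi m a0 y) \<le> W y * norm (X i - a0)"
            using Fi_diff_bound[OF True d Xi(1)] unfolding W_def .
          then have "norm ((Fi m (X i) y - Fi m a0 y) / (X i - a0)) \<le> W y"
            using Xi by (simp add: norm_divide divide_le_eq)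
          then show ?thesis using True by simp
        qed simp
      qed
    qed
    then show "((\<lambda>z. (Phi z - Phi a0) / (z - a0)) \<circ> X) \<longlonglongrightarrow> D"
      unfolding o_def eq D_def set_lebesgue_integral_def .
  qed
  moreover have "at a0 within ball a0 d = at a0" using d by (intro at_within_open) auto
  ultimately have "((\<lambda>z. (Phi z - Phi a0) / (z - a0)) \<longlongrightarrow> D) (at a0)"
    by (simp only:)
  then have "(Phi has_field_derivative D) (at a0)" unfolding has_field_derivative_iff .
  then show ?thesis unfolding Phi_def D_def .
qed


lemma Gk:
  fixes k :: real
  assumes a: "Re a > -1" and k: "k > 0"
  shows "set_integrable lborel {0<..} (\<lambda>y. exp (a * complex_of_real (ln y)) * complex_of_real (exp (- (k * y))))"
    "(LINT y:{0<..}|lborel. exp (a * complex_of_real (ln y)) * complex_of_real (exp (- (k * y))))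
       = Gamma (a + 1) * exp (- (a + 1) * complex_of_real (ln k))"
proof -
  define f where "f y = exp (a * complex_of_real (ln y)) * complex_of_real (exp (- (k * y)))" for y
  define h where "h y = exp (a * complex_of_real (ln y)) * complex_of_real (exp (- y))" for y
  have hint: "set_integrable lborel {0<..} h"
  proof (rule set_integrable_bound[OF base_int[where b="Re a"]])
    show "set_borel_measurable lborel {0<..} h"
      unfolding set_borel_measurable_def h_def by measurable
    show "AE x in lborel. x \<in> {0<..} \<longrightarrow> norm (h x) \<le> norm (exp (Re a * ln x) * exp (- x))"
      by (intro AE_I2 impI) (simp add: h_def norm_mult)
  qed (use a in auto)
  have "(h has_integral Gamma (a + 1)) {0<..}"
  proof -
    have "((\<lambda>t. complex_of_real t powr (a + 1 - 1) / complex_of_real (exp t)) has_integral Gamma (a + 1)) {0<..}"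
      using a by (intro Gamma_integral_complex') auto
    moreover have "complex_of_real t powr (a + 1 - 1) / complex_of_real (exp t) = h t" if "t \<in> {0<..}" for t
      using that by (simp add: h_def powr_def Ln_of_real exp_minus field_simps)
    ultimately show ?thesis using has_integral_cong by (metis (no_types, lifting))
  qed
  then have hval: "(LINT y:{0<..}|lborel. h y) = Gamma (a + 1)"
    using set_borel_integral_eq_integral(2)[OF hint] by (simp add: integral_unique)
  have resc: "(\<lambda>x. indicator {0<..} (0 + k * x) *\<^sub>R h (0 + k * x)) =
     (\<lambda>x. exp (a * complex_of_real (ln k)) * (indicator {0<..} x *\<^sub>R f x))"
  proof
    fix x :: real
    show "indicator {0<..} (0 + k * x) *\<^sub>R h (0 + k * x) = exp (a * complex_of_real (ln k)) * (indicator {0<..} x *\<^sub>R f x)"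
    proof (cases "x > 0")
      case True
      then have "ln (k * x) = ln k + ln x" using k by (simp add: ln_mult)
      then show ?thesis using True k
        by (simp add: h_def f_def indicator_def distrib_left exp_add mult_ac)
    next
      case False
      then show ?thesis using k by (simp add: indicator_def zero_less_mult_iff)
    qed
  qed
  have i1: "integrable lborel (\<lambda>x. indicator {0<..} x *\<^sub>R h x)"
    using hint by (simp add: set_integrable_def)
  have i2: "integrable lborel (\<lambda>x. exp (a * complex_of_real (ln k)) * (indicator {0<..} x *\<^sub>R f x))"
    using lborel_integrable_real_affine[OF i1, of k 0] k unfolding resc by simp
  have i3: "integrable lborel (\<lambda>x. indicator {0<..} x *\<^sub>R f x)"
  proof -
    have "integrable lborel (\<lambda>x. exp (- a * complex_of_real (ln k)) * (exp (a * complex_of_real (ln k)) * (indicator {0<..} x *\<^sub>R f x)))"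
      using i2 by (rule integrable_mult_right)
    then show ?thesis by (simp add: mult.assoc[symmetric] flip: exp_add)
  qed
  then show "set_integrable lborel {0<..} f" by (simp add: set_integrable_def)
  have "Gamma (a + 1) = (LINT y:{0<..}|lborel. h y)" using hval by simp
  also have "\<dots> = \<bar>k\<bar> *\<^sub>R (\<integral>x. indicator {0<..} (0 + k * x) *\<^sub>R h (0 + k * x) \<partial>lborel)"
    unfolding set_lebesgue_integral_def using k by (intro lborel_integral_real_affine) auto
  also have "\<dots> = k *\<^sub>R (exp (a * complex_of_real (ln k)) * (LINT y:{0<..}|lborel. f y))"
    unfolding resc set_lebesgue_integral_def integral_mult_right_zero using k by simp
  also have "\<dots> = exp ((a + 1) * complex_of_real (ln k)) * (LINT y:{0<..}|lborel. f y)"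
    using k by (simp add: scaleR_conv_of_real distrib_right exp_add exp_of_real mult_ac)
  finally have G: "Gamma (a + 1) = exp ((a + 1) * complex_of_real (ln k)) * (LINT y:{0<..}|lborel. f y)" .
  have "Gamma (a + 1) * exp (- (a + 1) * complex_of_real (ln k)) =
     (LINT y:{0<..}|lborel. f y) * (exp ((a + 1) * complex_of_real (ln k)) * exp (- (a + 1) * complex_of_real (ln k)))"
    unfolding G by (simp only: mult_ac)
  also have "exp ((a + 1) * complex_of_real (ln k)) * exp (- (a + 1) * complex_of_real (ln k)) = 1"
    by (simp add: algebra_simps flip: exp_add)
  finally show "(LINT y:{0<..}|lborel. f y) = Gamma (a + 1) * exp (- (a + 1) * complex_of_real (ln k))"
    by simp
qed


definition Sm :: "nat \<Rightarrow> complex \<Rightarrow> complex" where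
  "Sm m a = (\<Sum>k=1..m. complex_of_real ((-1) ^ (k - 1) * real (m choose k)) * exp (- a * complex_of_real (ln (real k))))"

lemma gm_expand:
  "gm (Suc n) y = (\<Sum>j\<le>n. (-1) ^ j * real (n choose j) * exp (- (real (Suc j) * y)))"
proof -
  have "(1 - exp (- y)) ^ n = (\<Sum>j\<le>n. real (n choose j) * (- exp (- y)) ^ j * 1 ^ (n - j))"
    using binomial_ring[of "- exp (- y)" 1 n] by simp
  then have "gm (Suc n) y = (\<Sum>j\<le>n. exp (- y) * (real (n choose j) * (- exp (- y)) ^ j))"
    unfolding gm_def by (simp add: sum_distrib_left)
  also have "\<dots> = (\<Sum>j\<le>n. (-1) ^ j * real (n choose j) * exp (- (real (Suc j) * y)))"
  proof (rule sum.cong[OF refl])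
    fix j
    have p: "(- exp (- y)) ^ j = (-1) ^ j * exp (real j * (- y))"
      by (subst power_minus) (simp only: exp_of_nat_mult)
    have q: "exp (- y) * exp (real j * (- y)) = exp (- (real (Suc j) * y))"
      by (simp add: algebra_simps flip: exp_add)
    have "exp (- y) * (- exp (- y)) ^ j = (-1) ^ j * exp (- (real (Suc j) * y))"
      unfolding p q[symmetric] by (simp only: mult_ac)
    then show "exp (- y) * (real (n choose j) * (- exp (- y)) ^ j) = (-1) ^ j * real (n choose j) * exp (- (real (Suc j) * y))"
      by (metis (no_types, lifting) mult.assoc mult.left_commute)
  qed
  finally show ?thesis .
qed

lemma formula_pos:
  assumes m: "m > 0" and a: "Re a > -1"
  shows "of_nat m * (LINT y:{0<..}|lborel. Fi m a y) = Gamma (a + 1) * Sm m a"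
proof -
  obtain n where n: "m = Suc n" using m by (cases m) auto
  define T where "T j y = exp (a * complex_of_real (ln y)) * complex_of_real (exp (- (real (Suc j) * y)))" for j y
  have Fi_eq: "Fi m a y = (\<Sum>j\<le>n. complex_of_real ((-1) ^ j * real (n choose j)) * T j y)" for y
    unfolding Fi_def n gm_expand T_def by (simp add: sum_distrib_left mult_ac)
  have Tint: "set_integrable lborel {0<..} (T j)" for j
    unfolding T_def using Gk(1)[OF a, of "real (Suc j)"] by simp
  have Tval: "(LINT y:{0<..}|lborel. T j y) = Gamma (a + 1) * exp (- (a + 1) * complex_of_real (ln (real (Suc j))))" for j
    unfolding T_def using Gk(2)[OF a, of "real (Suc j)"] by simp
  have "(LINT y:{0<..}|lborel. Fi m a y) =
        (\<Sum>j\<le>n. complex_of_real ((-1) ^ j * real (n choose j)) * (LINT y:{0<..}|lborel. T j y))"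
  proof -
    have "(LINT y:{0<..}|lborel. Fi m a y) = 
       integral\<^sup>L lborel (\<lambda>y. \<Sum>j\<le>n. indicator {0<..} y *\<^sub>R (complex_of_real ((-1) ^ j * real (n choose j)) * T j y))"
      unfolding set_lebesgue_integral_def Fi_eq by (simp add: scaleR_sum_right)
    also have "\<dots> = (\<Sum>j\<le>n. integral\<^sup>L lborel (\<lambda>y. indicator {0<..} y *\<^sub>R (complex_of_real ((-1) ^ j * real (n choose j)) * T j y)))"
    proof (rule Bochner_Integration.integral_sum[where f="\<lambda>j y. indicator {0<..} y *\<^sub>R (complex_of_real ((-1) ^ j * real (n choose j)) * T j y)"])
      fix j
      have "integrable lborel (\<lambda>y. complex_of_real ((-1) ^ j * real (n choose j)) * (indicator {0<..} y *\<^sub>R T j y))"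
        using Tint[of j] unfolding set_integrable_def by (rule integrable_mult_right)
      then show "integrable lborel (\<lambda>y. indicator {0<..} y *\<^sub>R (complex_of_real ((-1) ^ j * real (n choose j)) * T j y))"
        by (simp add: scaleR_conv_of_real mult_ac)
    qed
    also have "\<dots> = (\<Sum>j\<le>n. complex_of_real ((-1) ^ j * real (n choose j)) * (LINT y:{0<..}|lborel. T j y))"
      unfolding set_lebesgue_integral_def by (simp add: integral_mult_right_zero[symmetric] mult_ac)
    finally show ?thesis .
  qed
  also have "\<dots> = Gamma (a + 1) * (\<Sum>j\<le>n. complex_of_real ((-1) ^ j * real (n choose j)) * exp (- (a + 1) * complex_of_real (ln (real (Suc j)))))"
    unfolding Tval by (simp add: sum_distrib_left mult_ac)
  finally have 1: "of_nat m * (LINT y:{0<..}|lborel. Fi m a y) = Gamma (a + 1) *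
      (\<Sum>j\<le>n. of_nat m * (complex_of_real ((-1) ^ j * real (n choose j)) * exp (- (a + 1) * complex_of_real (ln (real (Suc j))))))"
    by (simp add: sum_distrib_left mult_ac)
  have "Sm m a = (\<Sum>j\<le>n. complex_of_real ((-1) ^ j * real (Suc n choose Suc j)) * exp (- a * complex_of_real (ln (real (Suc j)))))"
    unfolding Sm_def n
    by (simp only: One_nat_def sum.atLeast1_atMost_eq lessThan_Suc_atMost) simp
  also have "\<dots> = (\<Sum>j\<le>n. of_nat m * (complex_of_real ((-1) ^ j * real (n choose j)) * exp (- (a + 1) * complex_of_real (ln (real (Suc j))))))"
  proof (rule sum.cong[OF refl])
    fix j
    have e: "exp (- (a + 1) * complex_of_real (ln (real (Suc j)))) = exp (- a * complex_of_real (ln (real (Suc j)))) / of_nat (Suc j)"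
    proof -
      have "exp (- (a + 1) * complex_of_real (ln (real (Suc j)))) = exp (- a * complex_of_real (ln (real (Suc j)))) * exp (- complex_of_real (ln (real (Suc j))))"
        by (simp add: algebra_simps flip: exp_add)
      also have "exp (- complex_of_real (ln (real (Suc j)))) = 1 / of_nat (Suc j)"
      proof -
        have "exp (complex_of_real (ln (real (Suc j)))) = complex_of_real (real (Suc j))"
          by (subst exp_of_real) (simp del: of_nat_Suc)
        then show ?thesis by (simp add: exp_minus divide_inverse del: of_nat_Suc)
      qed
      finally show ?thesis by simp
    qed
    have b': "(of_nat (Suc n) :: complex) * of_nat (n choose j) = of_nat (Suc n choose Suc j) * of_nat (Suc j)"
    proof -
      have "Suc n * (n choose j) = (Suc n choose Suc j) * Suc j" by (rule Suc_times_binomial_eq)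
      then have "(of_nat (Suc n * (n choose j)) :: complex) = of_nat ((Suc n choose Suc j) * Suc j)" by (simp only:)
      then show ?thesis by (simp only: of_nat_mult)
    qed
    show "complex_of_real ((-1) ^ j * real (Suc n choose Suc j)) * exp (- a * complex_of_real (ln (real (Suc j)))) =
       of_nat m * (complex_of_real ((-1) ^ j * real (n choose j)) * exp (- (a + 1) * complex_of_real (ln (real (Suc j)))))"
    proof -
      define E where "E = exp (- a * complex_of_real (ln (real (Suc j))))"
      define C where "C = (of_nat (n choose j) :: complex)"
      define C' where "C' = (of_nat (Suc n choose Suc j) :: complex)"
      define N where "N = (of_nat (Suc n) :: complex)"
      define J where "J = (of_nat (Suc j) :: complex)"
      have J: "J \<noteq> 0" unfolding J_def by (simp del: of_nat_Suc)
      have bb: "N * C = C' * J" using b' unfolding N_def C_def C'_def J_def .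
      have "N * ((-1) ^ j * C * (E / J)) = (-1) ^ j * E * ((N * C) / J)" by (simp add: divide_inverse mult_ac)
      also have "\<dots> = (-1) ^ j * C' * E" unfolding bb using J by simp
      finally have "N * ((-1) ^ j * C * (E / J)) = (-1) ^ j * C' * E" .
      then show ?thesis unfolding e n E_def[symmetric] N_def C_def C'_def J_def by (simp del: of_nat_Suc binomial_Suc_Suc)
    qed
  qed
  finally have sm: "Sm m a = (\<Sum>j\<le>n. of_nat m * (complex_of_real ((-1) ^ j * real (n choose j)) * exp (- (a + 1) * complex_of_real (ln (real (Suc j))))))" .
  show ?thesis unfolding sm by (rule 1)
qed


definition Phi :: "nat \<Rightarrow> complex \<Rightarrow> complex" where
  "Phi m a = (LINT y:{0<..}|lborel. Fi m a y)"

lemma Re_nonpos_Ints: "z \<in> \<int>\<^sub>\<le>\<^sub>0 \<Longrightarrow> Re z \<le> 0"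
  by (elim nonpos_Ints_cases) auto

lemma Phi_holo:
  assumes "m > 0"
  shows "(\<lambda>a. of_nat m * Phi m a) holomorphic_on {a. Re a > - real m}"
proof -
  have "Phi m holomorphic_on {a. Re a > - real m}"
    unfolding holomorphic_on_open[OF open_halfspace_Re_gt] Phi_def
    using Phi_deriv assms by blast
  then show ?thesis by (intro holomorphic_intros)
qed

lemma Sm_deriv:
  "(Sm m has_field_derivative
     (\<Sum>k=1..m. complex_of_real ((-1) ^ (k - 1) * real (m choose k)) *
        (exp (- a * complex_of_real (ln (real k))) * (- complex_of_real (ln (real k)))))) (at a)"
  unfolding Sm_def[abs_def] by (auto intro!: derivative_eq_intros simp: mult_ac)

lemma Sm_holo: "Sm m holomorphic_on A"
  using Sm_deriv unfolding holomorphic_on_def field_differentiable_def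
  by (meson has_field_derivative_at_within)

lemma continuation:
  assumes m: "m > 0" and a: "Re a > - real m" "a \<notin> \<int>\<^sub>\<le>\<^sub>0"
  shows "of_nat m * Phi m a = Gamma (a + 1) * Sm m a"
proof (rule analytic_continuation_open[where s = "{a. Re a > 0}" and s' = "{a. Re a > - real m} - \<int>\<^sub>\<le>\<^sub>0"
      and f = "\<lambda>a. of_nat m * Phi m a" and g = "\<lambda>a. Gamma (a + 1) * Sm m a"])
  show "open {a. Re a > 0}" by (rule open_halfspace_Re_gt)
  show "open ({a. Re a > - real m} - \<int>\<^sub>\<le>\<^sub>0)"
    by (intro open_Diff open_halfspace_Re_gt closed_nonpos_Ints)
  show "{a. Re a > 0} \<noteq> {}"
  proof -
    have "1 \<in> {a. Re a > 0}" by simp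
    then show ?thesis by blast
  qed
  show "connected ({a. Re a > - real m} - \<int>\<^sub>\<le>\<^sub>0)"
  proof (rule connected_open_diff_countable)
    show "countable (\<int>\<^sub>\<le>\<^sub>0 :: complex set)"
      using countable_int nonpos_Ints_subset_Ints countable_subset by blast
  qed (auto intro: open_halfspace_Re_gt convex_connected convex_halfspace_Re_gt)
  show "{a. Re a > 0} \<subseteq> {a. Re a > - real m} - \<int>\<^sub>\<le>\<^sub>0"
    using Re_nonpos_Ints by fastforce
  show "(\<lambda>a. of_nat m * Phi m a) holomorphic_on {a. Re a > - real m} - \<int>\<^sub>\<le>\<^sub>0"
    by (rule holomorphic_on_subset[OF Phi_holo[OF m]]) auto
  show "(\<lambda>a. Gamma (a + 1) * Sm m a) holomorphic_on {a. Re a > - real m} - \<int>\<^sub>\<le>\<^sub>0"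
  proof (intro holomorphic_intros Sm_holo)
    fix x assume x: "x \<in> {a. Re a > - real m} - \<int>\<^sub>\<le>\<^sub>0"
    show "x + 1 \<notin> \<int>\<^sub>\<le>\<^sub>0"
    proof
      assume "x + 1 \<in> \<int>\<^sub>\<le>\<^sub>0"
      then obtain n where "x + 1 = of_int n" "n \<le> 0" by (elim nonpos_Ints_cases)
      then have "x = of_int (n - 1)" by (simp add: algebra_simps)
      moreover have "n - 1 \<le> 0" using \<open>n \<le> 0\<close> by simp
      ultimately have "x \<in> \<int>\<^sub>\<le>\<^sub>0" by (metis nonpos_Ints_of_int)
      then show False using x by auto
    qed
  qed
  show "of_nat m * Phi m z = Gamma (z + 1) * Sm m z" if "z \<in> {a. Re a > 0}" for z
    unfolding Phi_def using formula_pos[OF m, of z] that by simp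
  show "a \<in> {a. Re a > - real m} - \<int>\<^sub>\<le>\<^sub>0" using a by auto
qed

lemma I_eq:
  assumes "y > 0"
  shows "I_integrand a m y = Fi m a y"
  using assms unfolding I_integrand_def Fi_def gm_def
  by (simp add: powr_def Ln_of_real mult.assoc)

lemma I_fun_eq: "I_fun a m = of_nat m * Phi m a"
  unfolding I_fun_def Phi_def
  by (subst set_lebesgue_integral_cong[where g = "Fi m a"]) (auto simp: I_eq)

lemma I_int_iff: "set_integrable lborel {0<..} (I_integrand a m) \<longleftrightarrow> set_integrable lborel {0<..} (Fi m a)"
  by (rule set_integrable_cong) (auto simp: I_eq)

lemma sum_form:
  "(\<Sum>k=1..m. (-1) ^ (k - 1) * of_nat (m choose k) * (1 / (of_nat k powr a))) = Sm m a"
  unfolding Sm_def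
proof (rule sum.cong[OF refl])
  fix k assume k: "k \<in> {1..m}"
  have "of_nat k powr a = exp (a * complex_of_real (ln (real k)))"
    using k by (simp add: powr_def Ln_of_nat)
  then show "(-1) ^ (k - 1) * of_nat (m choose k) * (1 / (of_nat k powr a)) =
     complex_of_real ((-1) ^ (k - 1) * real (m choose k)) * exp (- a * complex_of_real (ln (real k)))"
    by (simp add: exp_minus divide_inverse)
qed


lemma near_neg_int:
  fixes n :: nat and a :: complex
  assumes "a \<noteq> - of_nat n" "dist a (- of_nat n) < 1"
  shows "a \<notin> \<int>\<^sub>\<le>\<^sub>0"
proof
  assume "a \<in> \<int>\<^sub>\<le>\<^sub>0"
  then obtain j where j: "a = of_int j" by (elim nonpos_Ints_cases) auto
  have "dist a (- of_nat n) = norm (of_int (j + int n) :: complex)"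
    using j by (simp add: dist_norm)
  also have "\<dots> = \<bar>real_of_int (j + int n)\<bar>" by (simp only: norm_of_int)
  finally have "\<bar>j + int n\<bar> < 1" using assms(2) by linarith
  then have "j = - int n" by linarith
  then show False using assms(1) j by simp
qed

lemma part2:
  assumes m: "m > 0" and n: "n \<in> {1..m-1}"
  shows "I_fun (- of_nat n) m = complex_of_real
          ((-1) ^ (n - 1) / fact (n - 1) *
           (\<Sum>k=1..m. (-1) ^ k * real (m choose k) * real k ^ n * ln (real k)))"
proof -
  have n1: "1 \<le> n" and nm: "n < m" using n by auto
  define z0 where "z0 = - (of_nat n :: complex)"
  define Ph where "Ph a = of_nat m * Phi m a" for a
  define S' where "S' = (\<Sum>k=1..m. complex_of_real ((-1) ^ (k - 1) * real (m choose k)) *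
        (exp (- z0 * complex_of_real (ln (real k))) * (- complex_of_real (ln (real k)))))"
  have Rez0: "Re z0 > - real m" using nm by (simp add: z0_def)
  have Phcont: "(Ph \<longlongrightarrow> Ph z0) (at z0)"
  proof -
    have "isCont (Phi m) z0"
      using Phi_deriv[OF Rez0 m] unfolding Phi_def[abs_def] by (rule DERIV_isCont)
    then show ?thesis unfolding Ph_def isCont_def by (intro tendsto_intros)
  qed
  have ev: "eventually (\<lambda>a. Ph a = Gamma (a + 1) * Sm m a) (at z0)"
    unfolding eventually_at
  proof (intro exI[of _ 1] conjI ballI impI)
    fix a assume a: "a \<in> UNIV" "a \<noteq> z0 \<and> dist a z0 < 1"
    have "Re a > Re z0 - 1"
    proof -
      have "\<bar>Re a - Re z0\<bar> < 1"
        using a abs_Re_le_cmod[of "a - z0"] by (auto simp: dist_norm)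
      then show ?thesis by linarith
    qed
    then have "Re a > - real m" using nm by (simp add: z0_def)
    moreover have "a \<notin> \<int>\<^sub>\<le>\<^sub>0" using near_neg_int[of a n] a by (simp add: z0_def)
    ultimately show "Ph a = Gamma (a + 1) * Sm m a"
      unfolding Ph_def using continuation[OF m] by blast
  qed simp
  have z0n: "z0 + 1 = - of_nat (n - 1)" using n1 by (simp add: z0_def of_nat_diff)
  have shift: "filterlim (\<lambda>a. a + 1) (at (- of_nat (n - 1))) (at z0)"
    unfolding z0n[symmetric]
    by (intro filterlim_atI tendsto_eq_intros) (auto simp: eventually_at_filter)
  have Smlim: "(Sm m \<longlongrightarrow> Sm m z0) (at z0)"
    using DERIV_isCont[OF Sm_deriv] unfolding isCont_def .
  have S0: "Sm m z0 = 0"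
  proof (rule ccontr)
    assume nz: "Sm m z0 \<noteq> 0"
    have "filterlim (\<lambda>a. Gamma (a + 1)) at_infinity (at z0)"
      using filterlim_compose[OF Gamma_poles[of "n - 1"] shift] by simp
    from tendsto_mult_filterlim_at_infinity[OF Smlim nz this]
    have "filterlim (\<lambda>a. Sm m a * Gamma (a + 1)) at_infinity (at z0)" .
    moreover have ev2: "eventually (\<lambda>a. Sm m a * Gamma (a + 1) = Ph a) (at z0)"
      using ev by eventually_elim (simp add: mult.commute)
    ultimately have "filterlim Ph at_infinity (at z0)"
      using filterlim_cong[OF refl refl ev2] by (simp only:)
    then show False
      using not_tendsto_and_filterlim_at_infinity[OF _ Phcont] by simp
  qed
  define c where "c = ((-1) ^ (n - 1) / fact (n - 1) :: complex)"
  have lim1: "((\<lambda>a. Gamma (a + 1) * (a - z0)) \<longlongrightarrow> c) (at z0)"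
  proof -
    have "((\<lambda>a. Gamma (a + 1) * ((a + 1) + of_nat (n - 1))) \<longlongrightarrow> c) (at z0)"
      unfolding c_def using filterlim_compose[OF Gamma_residues[of "n - 1"] shift] by simp
    moreover have "(\<lambda>a. Gamma (a + 1) * ((a + 1) + of_nat (n - 1))) = (\<lambda>a. Gamma (a + 1) * (a - z0))"
      using n1 by (auto simp: z0_def of_nat_diff)
    ultimately show ?thesis by (simp only:)
  qed
  have lim2: "((\<lambda>a. Sm m a / (a - z0)) \<longlongrightarrow> S') (at z0)"
    using Sm_deriv[of m z0] unfolding has_field_derivative_iff S0 S'_def by simp
  have "((\<lambda>a. Gamma (a + 1) * (a - z0) * (Sm m a / (a - z0))) \<longlongrightarrow> c * S') (at z0)"
    by (rule tendsto_mult[OF lim1 lim2])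
  moreover have "eventually (\<lambda>a. Gamma (a + 1) * (a - z0) * (Sm m a / (a - z0)) = Ph a) (at z0)"
    using ev eventually_at_filter[of "\<lambda>a. a \<noteq> z0"]
  proof -
    have "eventually (\<lambda>a. a \<noteq> z0) (at z0)" by (simp add: eventually_at_filter)
    with ev show ?thesis by eventually_elim simp
  qed
  ultimately have "(Ph \<longlongrightarrow> c * S') (at z0)" by (rule Lim_transform_eventually)
  with Phcont have PhS: "Ph z0 = c * S'" by (intro tendsto_unique) auto
  have S'eq: "S' = complex_of_real (\<Sum>k=1..m. (-1) ^ k * real (m choose k) * real k ^ n * ln (real k))"
    unfolding S'_def of_real_sum
  proof (rule sum.cong[OF refl])
    fix k assume k: "k \<in> {1..m}"
    have e: "exp (- z0 * complex_of_real (ln (real k))) = complex_of_real (real k ^ n)"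
    proof -
      have "exp (- z0 * complex_of_real (ln (real k))) = exp (complex_of_real (ln (real k))) ^ n"
        unfolding z0_def by (simp add: exp_of_nat_mult[symmetric])
      also have "exp (complex_of_real (ln (real k))) = complex_of_real (real k)"
        using k by (subst exp_of_real) simp
      finally show ?thesis by simp
    qed
    have s: "(-1::real) ^ (k - 1) * (-1) = (-1) ^ k"
      using k by (cases k) auto
    show "complex_of_real ((-1) ^ (k - 1) * real (m choose k)) *
        (exp (- z0 * complex_of_real (ln (real k))) * (- complex_of_real (ln (real k)))) =
        complex_of_real ((-1) ^ k * real (m choose k) * real k ^ n * ln (real k))"
      unfolding e s[symmetric] by (simp add: mult_ac)
  qed
  show ?thesis
    using PhS unfolding I_fun_eq S'eq c_def z0_def[symmetric] Ph_def[symmetric]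
    by simp
qed


lemma alt_sum:
  assumes "m > 0"
  shows "(\<Sum>k=1..m. (-1) ^ (k - 1) * real (m choose k)) = 1"
proof -
  have "(\<Sum>i\<le>m. (-1) ^ i * real (m choose i)) = 0"
    using choose_alternating_sum[OF assms] by simp
  also have "(\<Sum>i\<le>m. (-1) ^ i * real (m choose i)) = 1 + (\<Sum>i=1..m. (-1) ^ i * real (m choose i))"
    by (simp add: atMost_atLeast0 sum.atLeast_Suc_atMost)
  also have "(\<Sum>i=1..m. (-1) ^ i * real (m choose i)) = - (\<Sum>k=1..m. (-1) ^ (k - 1) * real (m choose k))"
    unfolding sum_negf[symmetric]
  proof (rule sum.cong[OF refl])
    fix k assume "k \<in> {1..m}"
    then obtain j where "k = Suc j" by (cases k) auto
    then show "(-1) ^ k * real (m choose k) = - ((-1) ^ (k - 1) * real (m choose k))" by simp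
  qed
  finally show ?thesis by simp
qed

lemma part3:
  assumes m: "m > 0"
  shows "set_integrable lborel {0<..} (\<lambda>y::real. exp (- y) * (1 - exp (- y)) ^ (m - 1) * ln y)
      \<and> ((\<lambda>\<alpha>. I_fun \<alpha> m) has_field_derivative
          complex_of_real (real m * (LINT y:{0<..}|lborel. exp (- y) * (1 - exp (- y)) ^ (m - 1) * ln y)))
         (at 0)
      \<and> real m * (LINT y:{0<..}|lborel. exp (- y) * (1 - exp (- y)) ^ (m - 1) * ln y)
          = - euler_mascheroni - (\<Sum>k=1..m. (-1) ^ (k - 1) * real (m choose k) * ln (real k))"
proof -
  define h where "h y = exp (- y) * (1 - exp (- y)) ^ (m - 1) * ln y" for y :: real
  have cf: "complex_of_real (ln y) * Fi m 0 y = complex_of_real (h y)" for y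
    unfolding Fi_def h_def gm_def by (simp add: mult_ac)
  have ci: "set_integrable lborel {0<..} (\<lambda>y. complex_of_real (h y))"
    using lnFi_int[where a=0 and m=m] m unfolding cf by simp
  have hint: "set_integrable lborel {0<..} h"
  proof -
    have "integrable lborel (\<lambda>y. complex_of_real (indicator {0<..} y *\<^sub>R h y))"
      using ci unfolding set_integrable_def by (simp add: scaleR_conv_of_real)
    then show ?thesis unfolding set_integrable_def complex_of_real_integrable_eq .
  qed
  have LI: "(LINT y:{0<..}|lborel. complex_of_real (ln y) * Fi m 0 y) = complex_of_real (LINT y:{0<..}|lborel. h y)"
    unfolding cf by (rule set_integral_complex_of_real)
  define D0 where "D0 = complex_of_real (real m * (LINT y:{0<..}|lborel. h y))"
  have dPh: "((\<lambda>a. of_nat m * Phi m a) has_field_derivative D0) (at 0)"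
  proof -
    have "((\<lambda>a. of_nat m * Phi m a) has_field_derivative of_nat m * (LINT y:{0<..}|lborel. complex_of_real (ln y) * Fi m 0 y)) (at 0)"
    proof -
      have r0: "Re (0::complex) > - real m" using m by simp
      show ?thesis using Phi_deriv[OF r0 m] unfolding Phi_def[abs_def] by (intro DERIV_cmult)
    qed
    then show ?thesis unfolding LI D0_def by simp
  qed
  have IF: "(\<lambda>\<alpha>. I_fun \<alpha> m) = (\<lambda>a. of_nat m * Phi m a)" by (rule ext) (rule I_fun_eq)
  define Sd where "Sd = (\<Sum>k=1..m. complex_of_real ((-1) ^ (k - 1) * real (m choose k)) *
        (exp (- 0 * complex_of_real (ln (real k))) * (- complex_of_real (ln (real k)))))"
  have g: "(Gamma has_field_derivative Gamma 1 * Digamma 1) (at ((0::complex) + 1))"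
    using has_field_derivative_Gamma[of "1 :: complex" UNIV] by simp
  have s: "((\<lambda>a::complex. a + 1) has_field_derivative 1) (at 0)" by (auto intro!: derivative_eq_intros)
  have dG: "((\<lambda>a::complex. Gamma (a + 1)) has_field_derivative Gamma 1 * Digamma 1 * 1) (at 0)"
    by (rule DERIV_chain2[OF g s])
  have dR: "((\<lambda>a. Gamma (a + 1) * Sm m a) has_field_derivative
        Gamma 1 * Digamma 1 * 1 * Sm m 0 + Sd * Gamma (0 + 1)) (at 0)"
    using DERIV_mult[OF dG Sm_deriv[of m 0]] unfolding Sd_def .
  have dR': "((\<lambda>a. Gamma (a + 1) * Sm m a) has_field_derivative D0) (at 0)"
  proof (rule has_field_derivative_transform_within_open[OF dPh, of "ball 0 1"])
    fix a :: complex assume "a \<in> ball 0 1"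
    then have "\<bar>Re a\<bar> < 1" using abs_Re_le_cmod[of a] by simp
    then have "Re a > -1" by linarith
    then show "of_nat m * Phi m a = Gamma (a + 1) * Sm m a"
      unfolding Phi_def using formula_pos[OF m] by blast
  qed auto
  have D0eq: "D0 = Gamma 1 * Digamma 1 * 1 * Sm m 0 + Sd * Gamma (0 + 1)"
    using DERIV_unique[OF dR' dR] .
  have Sm0: "Sm m 0 = 1"
  proof -
    have "Sm m 0 = complex_of_real (\<Sum>k=1..m. (-1) ^ (k - 1) * real (m choose k))"
      unfolding Sm_def of_real_sum by simp
    also have "\<dots> = 1" unfolding alt_sum[OF m] by simp
    finally show ?thesis .
  qed
  have Sdeq: "Sd = - complex_of_real (\<Sum>k=1..m. (-1) ^ (k - 1) * real (m choose k) * ln (real k))"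
    unfolding Sd_def by (simp add: of_real_sum sum_negf[symmetric] mult_ac)
  have "D0 = complex_of_real (- euler_mascheroni - (\<Sum>k=1..m. (-1) ^ (k - 1) * real (m choose k) * ln (real k)))"
    unfolding D0eq Sm0 Sdeq by simp
  then have val: "real m * (LINT y:{0<..}|lborel. h y) = - euler_mascheroni - (\<Sum>k=1..m. (-1) ^ (k - 1) * real (m choose k) * ln (real k))"
    unfolding D0_def of_real_eq_iff .
  have A: "set_integrable lborel {0<..} (\<lambda>y::real. exp (- y) * (1 - exp (- y)) ^ (m - 1) * ln y)"
    using hint unfolding h_def .
  have B: "((\<lambda>\<alpha>. I_fun \<alpha> m) has_field_derivative
          complex_of_real (real m * (LINT y:{0<..}|lborel. exp (- y) * (1 - exp (- y)) ^ (m - 1) * ln y))) (at 0)"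
    using dPh unfolding IF D0_def h_def .
  have C: "real m * (LINT y:{0<..}|lborel. exp (- y) * (1 - exp (- y)) ^ (m - 1) * ln y)
          = - euler_mascheroni - (\<Sum>k=1..m. (-1) ^ (k - 1) * real (m choose k) * ln (real k))"
    using val unfolding h_def .
  show ?thesis using A B C by blast
qed


theorem lemma1:
  fixes m :: nat
  assumes "m > 0"
  shows
    "(\<forall>\<alpha>::complex. \<alpha> \<notin> \<int>\<^sub>\<le>\<^sub>0 \<and> Re (of_nat m + \<alpha>) > 0 \<longrightarrow>
        set_integrable lborel {0<..} (I_integrand \<alpha> m) \<and>
        I_fun \<alpha> m = Gamma (\<alpha> + 1) *
          (\<Sum>k=1..m. (-1) ^ (k - 1) * of_nat (m choose k) * (1 / (of_nat k powr \<alpha>))))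
   \<and> (\<forall>n\<in>{1..m-1}.
        I_fun (- of_nat n) m = complex_of_real
          ((-1) ^ (n - 1) / fact (n - 1) *
           (\<Sum>k=1..m. (-1) ^ k * real (m choose k) * real k ^ n * ln (real k))))
   \<and> (set_integrable lborel {0<..}
          (\<lambda>y::real. exp (- y) * (1 - exp (- y)) ^ (m - 1) * ln y)
      \<and> ((\<lambda>\<alpha>. I_fun \<alpha> m) has_field_derivative
          complex_of_real (real m * (LINT y:{0<..}|lborel. exp (- y) * (1 - exp (- y)) ^ (m - 1) * ln y)))
         (at 0)
      \<and> real m * (LINT y:{0<..}|lborel. exp (- y) * (1 - exp (- y)) ^ (m - 1) * ln y)
          = - euler_mascheroni - (\<Sum>k=1..m. (-1) ^ (k - 1) * real (m choose k) * ln (real k)))"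
proof -
  have P1: "\<forall>\<alpha>::complex. \<alpha> \<notin> \<int>\<^sub>\<le>\<^sub>0 \<and> Re (of_nat m + \<alpha>) > 0 \<longrightarrow>
        set_integrable lborel {0<..} (I_integrand \<alpha> m) \<and>
        I_fun \<alpha> m = Gamma (\<alpha> + 1) *
          (\<Sum>k=1..m. (-1) ^ (k - 1) * of_nat (m choose k) * (1 / (of_nat k powr \<alpha>)))"
  proof (intro allI impI)
    fix \<alpha> :: complex
    assume h: "\<alpha> \<notin> \<int>\<^sub>\<le>\<^sub>0 \<and> Re (of_nat m + \<alpha>) > 0"
    then have r: "Re \<alpha> > - real m" by simp
    show "set_integrable lborel {0<..} (I_integrand \<alpha> m) \<and>
        I_fun \<alpha> m = Gamma (\<alpha> + 1) *
          (\<Sum>k=1..m. (-1) ^ (k - 1) * of_nat (m choose k) * (1 / (of_nat k powr \<alpha>)))"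
      unfolding I_int_iff I_fun_eq sum_form
      using Fi_int[OF r assms] continuation[OF assms r] h by blast
  qed
  have P2: "\<forall>n\<in>{1..m-1}.
        I_fun (- of_nat n) m = complex_of_real
          ((-1) ^ (n - 1) / fact (n - 1) *
           (\<Sum>k=1..m. (-1) ^ k * real (m choose k) * real k ^ n * ln (real k)))"
    using part2[OF assms] by blast
  show ?thesis using P1 P2 part3[OF assms] by blast
qed

end
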